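(* If condition $(C_k)$ holds for every $k\in I_n$, then for all $i,j\in I_n$ with $i\ne j$ one has $a_{ii}>a_{ji}$, $a_{jj}>a_{ij}$, and $$\frac{a_{\ell i}(a_{jj}-a_{ij})+a_{\ell j}(a_{ii}-a_{ji})}{a_{ii}a_{jj}-a_{ij}a_{ji}}<1\quad\text{for all }\ell\in I_n\setminus\{i,j\},$$ and moreover $U_i=\max\left\{\frac{a_{jj}-a_{ij}}{a_{ii}a_{jj}-a_{ij}a_{ji}}: j\in I_n\setminus\{i\}\right\}$ for every $i\in I_n$.
   Context: Fix $n\ge 2$ and $I_m=\{1,\dots,m\}$. Consider the Lotka–Volterra system $x_i'=b_ix_i(1-\alpha_ix)$, $i\in I_n$, where $b_i>0$, $\alpha_i=(a_{i1},\dots,a_{in})$ with $a_{ii}>0$ and $a_{ij}\ge 0$, on $\mathbb{R}^n_+$. For $u\le v$ (componentwise), $[u,v]=\{x\in\mathbb{R}^n_+:u\le x\le v\}$. For $J\subset I_n$, $u^J_i=u_i$ for $i\in J$ and $0$ otherwise. $\gamma_i=\{x\in\mathbb{R}^n_+:\alpha_ix=1\}$. Define $U$ componentwise by: $U_i=a_{ii}^{-1}$ if $a_{ii}\le a_{ji}$ or $a_{ij}=0$ for some $j\ne i$; otherwise $U_i=0$ if $a_{ji}<a_{ii}$ and $a_{jk}\le a_{ik}$ for all $j,k\in I_n\setminus\{i\}$; otherwise $U_i=\max\{\frac{a_{kj}-a_{ij}}{a_{ii}a_{kj}-a_{ij}a_{ki}}: j,k\in I_n\setminus\{i\},\ a_{kj}>a_{ij}\}$.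 Condition $(C_k)$: either $\alpha_kU^{I_n\setminus\{k\}}<1$, or every $x\in\gamma_k\cap[0,U^{I_n\setminus\{k\}}]$ satisfies $\alpha_jx>1$ for all $j\in I_n\setminus\{k\}$. *)

theory Defs
  imports Complex_Main
begin

text \<open>Interaction matrix a :: nat => nat => real, indices in I_n = {1..n};
  points of R^n_+ are functions x :: nat => real (only indices in {1..n} matter).\<close>

definition alphaLV :: "nat \<Rightarrow> (nat \<Rightarrow> nat \<Rightarrow> real) \<Rightarrow> nat \<Rightarrow> (nat \<Rightarrow> real) \<Rightarrow> real" where
  "alphaLV n a i x = (\<Sum>j\<in>{1..n}. a i j * x j)"

definition restrictJ :: "nat set \<Rightarrow> (nat \<Rightarrow> real) \<Rightarrow> (nat \<Rightarrow> real)" where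
  "restrictJ J u = (\<lambda>i. if i \<in> J then u i else 0)"

definition Ubound :: "nat \<Rightarrow> (nat \<Rightarrow> nat \<Rightarrow> real) \<Rightarrow> nat \<Rightarrow> real" where
  "Ubound n a i =
    (if \<exists>j\<in>{1..n} - {i}. a i i \<le> a j i \<or> a i j = 0 then 1 / a i i
     else if (\<forall>j\<in>{1..n} - {i}. a j i < a i i) \<and>
             (\<forall>j\<in>{1..n} - {i}. \<forall>k\<in>{1..n} - {i}. a j k \<le> a i k) then 0
     else Max {(a k j - a i j) / (a i i * a k j - a i j * a k i) | j k.
                 j \<in> {1..n} - {i} \<and> k \<in> {1..n} - {i} \<and> a k j > a i j})"

definition condC :: "nat \<Rightarrow> (nat \<Rightarrow> nat \<Rightarrow> real) \<Rightarrow> nat \<Rightarrow> bool" where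
  "condC n a k \<longleftrightarrow>
     alphaLV n a k (restrictJ ({1..n} - {k}) (Ubound n a)) < 1 \<or>
     (\<forall>x. (\<forall>i\<in>{1..n}. 0 \<le> x i \<and> x i \<le> restrictJ ({1..n} - {k}) (Ubound n a) i)
            \<and> alphaLV n a k x = 1
          \<longrightarrow> (\<forall>j\<in>{1..n} - {k}. alphaLV n a j x > 1))"

end

theory Submission
  imports Defs
begin

lemma alpha_one:
  assumes "i \<in> {1..n}"
  shows "alphaLV n a l (\<lambda>m. if m = i then p else 0) = a l i * p"
  using assms unfolding alphaLV_def by (simp add: if_distrib[of "\<lambda>x. a l _ * x"] sum.delta cong: if_cong)

lemma alpha_two:
  assumes "i \<in> {1..n}" "j \<in> {1..n}"
  shows "alphaLV n a l (\<lambda>m. (if m = i then p else 0) + (if m = j then q else 0)) = a l i * p + a l j * q"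
  using assms unfolding alphaLV_def by (simp add: distrib_left sum.distrib if_distrib[of "\<lambda>x. a l _ * x"] sum.delta cong: if_cong)

lemma C_use:
  assumes nn: "\<forall>i\<in>{1..n}. \<forall>j\<in>{1..n}. a i j \<ge> 0"
    and C: "condC n a l" and l: "l \<in> {1..n}"
    and box: "\<forall>m\<in>{1..n}. 0 \<le> x m \<and> x m \<le> restrictJ ({1..n} - {l}) (Ubound n a) m"
    and one: "alphaLV n a l x = 1" and m: "m \<in> {1..n} - {l}"
  shows "alphaLV n a m x > 1"
proof -
  have "alphaLV n a l x \<le> alphaLV n a l (restrictJ ({1..n} - {l}) (Ubound n a))"
    unfolding alphaLV_def
  proof (rule sum_mono)
    fix k assume "k \<in> {1..n}"
    then show "a l k * x k \<le> a l k * restrictJ ({1..n} - {l}) (Ubound n a) k"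
      using box nn l by (intro mult_left_mono) auto
  qed
  with one C box m show ?thesis unfolding condC_def by auto
qed

lemma U_nonneg:
  assumes pos: "\<forall>i\<in>{1..n}. a i i > 0"
    and nn: "\<forall>i\<in>{1..n}. \<forall>j\<in>{1..n}. a i j \<ge> 0"
    and i: "i \<in> {1..n}"
  shows "0 \<le> Ubound n a i"
proof -
  define T where "T = {(a k j - a i j) / (a i i * a k j - a i j * a k i) | j k.
                 j \<in> {1..n} - {i} \<and> k \<in> {1..n} - {i} \<and> a k j > a i j}"
  have fin: "finite T"
  proof -
    have "T \<subseteq> (\<lambda>(j,k). (a k j - a i j) / (a i i * a k j - a i j * a k i)) ` ({1..n}\<times>{1..n})"
      unfolding T_def by auto
    then show ?thesis by (rule finite_subset) auto
  qed
  show ?thesis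
  proof (cases "\<exists>j\<in>{1..n} - {i}. a i i \<le> a j i \<or> a i j = 0")
    case True
    have "a i i > 0" using pos i by auto
    then show ?thesis using True by (simp add: Ubound_def)
  next
    case c1: False
    show ?thesis
    proof (cases "(\<forall>j\<in>{1..n} - {i}. a j i < a i i) \<and>
             (\<forall>j\<in>{1..n} - {i}. \<forall>k\<in>{1..n} - {i}. a j k \<le> a i k)")
      case True with c1 show ?thesis by (simp add: Ubound_def)
    next
      case c2: False
      have U: "Ubound n a i = Max T" unfolding Ubound_def T_def by (simp only: if_not_P[OF c1] if_not_P[OF c2])
      from c1 have lt: "\<forall>j\<in>{1..n}-{i}. a j i < a i i" by (meson not_le)
      with c2 obtain j k where jk: "j\<in>{1..n}-{i}" "k\<in>{1..n}-{i}" "a k j > a i j"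
        by (meson not_le)
      have aki: "a k i < a i i" using lt jk(2) by blast
      have h1: "a i j * a k i \<le> a i j * a i i"
        using nn i jk aki by (intro mult_left_mono) auto
      have h2: "a i i * a i j < a i i * a k j"
        using pos i jk by (intro mult_strict_left_mono) auto
      have "0 < (a k j - a i j) / (a i i * a k j - a i j * a k i)"
        using h1 h2 jk by (intro divide_pos_pos) (auto simp: mult.commute)
      moreover have "(a k j - a i j) / (a i i * a k j - a i j * a k i) \<in> T"
        unfolding T_def using jk by blast
      ultimately have "0 \<le> Max T" using fin by (meson Max_ge less_le_trans less_imp_le)
      then show ?thesis using U by simp
    qed
  qed
qed

lemma pair_lt:
  assumes pos: "\<forall>i\<in>{1..n}. a i i > 0"
    and nn: "\<forall>i\<in>{1..n}. \<forall>j\<in>{1..n}. a i j \<ge> 0"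
    and C: "\<forall>k\<in>{1..n}. condC n a k"
    and i: "i \<in> {1..n}" and j: "j \<in> {1..n}" and ij: "i \<noteq> j"
  shows "a j i < a i i"
proof (rule ccontr)
  assume "\<not> a j i < a i i"
  hence ge: "a i i \<le> a j i" by simp
  have aii: "a i i > 0" using pos i by auto
  with ge have aji: "a j i > 0" by simp
  have "\<exists>j\<in>{1..n}-{i}. a i i \<le> a j i \<or> a i j = 0" using ge j ij by auto
  hence Ui: "Ubound n a i = 1 / a i i" by (simp add: Ubound_def)
  define x where "x = (\<lambda>m. if m = i then 1 / a j i else (0::real))"
  have box: "\<forall>m\<in>{1..n}. 0 \<le> x m \<and> x m \<le> restrictJ ({1..n} - {j}) (Ubound n a) m"
  proof
    fix m assume m: "m \<in> {1..n}"
    show "0 \<le> x m \<and> x m \<le> restrictJ ({1..n} - {j}) (Ubound n a) m"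
    proof (cases "m = i")
      case True
      have "1 / a j i \<le> 1 / a i i" using ge aii by (simp add: frac_le)
      then show ?thesis using True ij Ui m aji unfolding x_def restrictJ_def by auto
    next
      case False
      then show ?thesis using U_nonneg[OF pos nn m] unfolding x_def restrictJ_def by auto
    qed
  qed
  have "alphaLV n a j x = 1" unfolding x_def using alpha_one[OF i] aji by simp
  from C_use[OF nn _ j box this] C j i ij have "alphaLV n a i x > 1" by auto
  moreover have "alphaLV n a i x = a i i / a j i" unfolding x_def using alpha_one[OF i] by simp
  moreover have "a i i / a j i \<le> 1" using ge aji by simp
  ultimately show False by simp
qed

lemma D_pos:
  fixes aii ajj aij aji :: real
  assumes "0 < aii" "0 \<le> aij" "aji < aii" "aij < ajj"
  shows "0 < aii * ajj - aij * aji"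
proof -
  have "aij * aji \<le> aij * aii" using assms by (intro mult_left_mono) auto
  moreover have "aii * aij < aii * ajj" using assms by (intro mult_strict_left_mono) auto
  ultimately show ?thesis by (simp add: mult.commute)
qed

lemma term_le_inv:
  fixes aii ajj aij aji :: real
  assumes "0 < aii" "0 \<le> aij" "aji < aii" "aij < ajj"
  shows "(ajj - aij) / (aii * ajj - aij * aji) \<le> 1 / aii"
proof -
  have D: "0 < aii * ajj - aij * aji" using D_pos assms by blast
  have "aij * aji \<le> aij * aii" using assms by (intro mult_left_mono) auto
  hence "(ajj - aij) * aii \<le> 1 * (aii * ajj - aij * aji)" by (simp add: algebra_simps)
  thus ?thesis using D assms(1) by (simp add: divide_simps)
qed

lemma frac_cmp:
  fixes aii ajj p r q c E D :: real
  assumes "0 \<le> p" "0 < E" "0 < D" "E = aii*c - p*q" "D = aii*ajj - p*r"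
    "q*(ajj-p) + c*(aii - r) < D"
  shows "(c-p)/E \<le> (ajj-p)/D"
proof -
  have "(ajj-p)*E - (c-p)*D = p*(D - q*(ajj-p) - c*(aii-r))"
    by (simp only: assms(4) assms(5)) (simp add: algebra_simps)
  moreover have "p*(D - q*(ajj-p) - c*(aii-r)) \<ge> 0"
    using assms(1,6) by (intro mult_nonneg_nonneg) auto
  ultimately have "(c-p)*D \<le> (ajj-p)*E" by linarith
  thus ?thesis using assms(2,3) by (simp add: divide_simps mult.commute)
qed

lemma xstar_le_U:
  assumes pos: "\<forall>i\<in>{1..n}. a i i > 0"
    and nn: "\<forall>i\<in>{1..n}. \<forall>j\<in>{1..n}. a i j \<ge> 0"
    and C: "\<forall>k\<in>{1..n}. condC n a k"
    and i: "i \<in> {1..n}" and j: "j \<in> {1..n}" and ij: "i \<noteq> j"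
  shows "(a j j - a i j) / (a i i * a j j - a i j * a j i) \<le> Ubound n a i"
proof -
  have p1: "a j i < a i i" using pair_lt[OF pos nn C i j ij] .
  have p2: "a i j < a j j" using pair_lt[OF pos nn C j i] i ij by auto
  have aii: "a i i > 0" using pos i by auto
  have aij: "a i j \<ge> 0" using nn i j by auto
  define T where "T = {(a k j - a i j) / (a i i * a k j - a i j * a k i) | j k.
                 j \<in> {1..n} - {i} \<and> k \<in> {1..n} - {i} \<and> a k j > a i j}"
  have fin: "finite T"
  proof -
    have "T \<subseteq> (\<lambda>(j,k). (a k j - a i j) / (a i i * a k j - a i j * a k i)) ` ({1..n}\<times>{1..n})"
      unfolding T_def by auto
    then show ?thesis by (rule finite_subset) auto
  qed
  show ?thesis
  proof (cases "\<exists>j\<in>{1..n} - {i}. a i i \<le> a j i \<or> a i j = 0")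
    case True
    hence "Ubound n a i = 1 / a i i" by (simp add: Ubound_def)
    then show ?thesis using term_le_inv[OF aii aij p1 p2] by simp
  next
    case c1: False
    show ?thesis
    proof (cases "(\<forall>j\<in>{1..n} - {i}. a j i < a i i) \<and>
             (\<forall>j\<in>{1..n} - {i}. \<forall>k\<in>{1..n} - {i}. a j k \<le> a i k)")
      case True
      hence "a j j \<le> a i j" using j ij by auto
      with p2 show ?thesis by simp
    next
      case c2: False
      have U: "Ubound n a i = Max T"
        unfolding Ubound_def T_def by (simp only: if_not_P[OF c1] if_not_P[OF c2])
      have "(a j j - a i j) / (a i i * a j j - a i j * a j i) \<in> T"
        unfolding T_def using j ij p2 by blast
      then show ?thesis using U fin by simp
    qed
  qed
qed

lemma l_cond:
  assumes pos: "\<forall>i\<in>{1..n}. a i i > 0"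
    and nn: "\<forall>i\<in>{1..n}. \<forall>j\<in>{1..n}. a i j \<ge> 0"
    and C: "\<forall>k\<in>{1..n}. condC n a k"
    and i: "i \<in> {1..n}" and j: "j \<in> {1..n}" and ij: "i \<noteq> j"
    and l: "l \<in> {1..n} - {i, j}"
  shows "(a l i * (a j j - a i j) + a l j * (a i i - a j i)) / (a i i * a j j - a i j * a j i) < 1"
proof (rule ccontr)
  have p1: "a j i < a i i" using pair_lt[OF pos nn C i j ij] .
  have p2: "a i j < a j j" using pair_lt[OF pos nn C j i] i ij by auto
  have aii: "a i i > 0" using pos i by auto
  have aij: "a i j \<ge> 0" using nn i j by auto
  define D where "D = a i i * a j j - a i j * a j i"
  have D: "D > 0" unfolding D_def using D_pos[OF aii aij p1 p2] .
  define xi where "xi = (a j j - a i j) / D"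
  define xj where "xj = (a i i - a j i) / D"
  have xi0: "xi \<ge> 0" unfolding xi_def using D p2 by simp
  have xj0: "xj \<ge> 0" unfolding xj_def using D p1 by simp
  have xiU: "xi \<le> Ubound n a i" unfolding xi_def D_def using xstar_le_U[OF pos nn C i j ij] .
  have xjU: "xj \<le> Ubound n a j" unfolding xj_def D_def
    using xstar_le_U[OF pos nn C j i] i ij by (simp add: mult.commute)
  define A where "A = a l i * xi + a l j * xj"
  have Aeq: "(a l i * (a j j - a i j) + a l j * (a i i - a j i)) / D = A"
    unfolding A_def xi_def xj_def by (simp add: add_divide_distrib)
  assume "\<not> (a l i * (a j j - a i j) + a l j * (a i i - a j i)) / (a i i * a j j - a i j * a j i) < 1"
  hence A1: "A \<ge> 1" using Aeq unfolding D_def by simp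
  have "a i i * xi + a i j * xj = (a i i*(a j j - a i j) + a i j*(a i i - a j i))/D"
    unfolding xi_def xj_def by (simp add: add_divide_distrib)
  also have "\<dots> = D / D" by (simp add: D_def algebra_simps)
  also have "\<dots> = 1" using D by simp
  finally have ieq: "a i i * xi + a i j * xj = 1" .
  define x where "x = (\<lambda>m. (if m = i then xi / A else 0) + (if m = j then xj / A else (0::real)))"
  have le1: "xi / A \<le> xi"
  proof -
    have "xi * 1 \<le> xi * A" using A1 xi0 by (intro mult_left_mono) auto
    thus ?thesis using A1 by (simp add: divide_simps)
  qed
  have le2: "xj / A \<le> xj"
  proof -
    have "xj * 1 \<le> xj * A" using A1 xj0 by (intro mult_left_mono) auto
    thus ?thesis using A1 by (simp add: divide_simps)
  qed
  have lr: "l \<in> {1..n}" "l \<noteq> i" "l \<noteq> j" using l by auto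
  have box: "\<forall>m\<in>{1..n}. 0 \<le> x m \<and> x m \<le> restrictJ ({1..n} - {l}) (Ubound n a) m"
  proof
    fix m assume m: "m \<in> {1..n}"
    show "0 \<le> x m \<and> x m \<le> restrictJ ({1..n} - {l}) (Ubound n a) m"
    proof (cases "m = i")
      case True
      then show ?thesis using ij le1 xiU xi0 A1 m lr unfolding x_def restrictJ_def by auto
    next
      case False
      show ?thesis
      proof (cases "m = j")
        case True
        then show ?thesis using ij le2 xjU xj0 A1 m lr unfolding x_def restrictJ_def by auto
      next
        case False
        then show ?thesis using \<open>m \<noteq> i\<close> U_nonneg[OF pos nn m] unfolding x_def restrictJ_def by auto
      qed
    qed
  qed
  have "alphaLV n a l x = a l i * (xi / A) + a l j * (xj / A)"
    unfolding x_def using alpha_two[OF i j] by simp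
  also have "\<dots> = (a l i * xi + a l j * xj) / A" by (simp add: add_divide_distrib)
  also have "\<dots> = A / A" by (simp only: A_def[symmetric])
  also have "\<dots> = 1" using A1 by simp
  finally have "alphaLV n a l x = 1" .
  from C_use[OF nn _ lr(1) box this] C lr i have gt: "alphaLV n a i x > 1" by auto
  have "alphaLV n a i x = a i i * (xi / A) + a i j * (xj / A)"
    unfolding x_def using alpha_two[OF i j] by simp
  also have "\<dots> = 1 / A" using ieq by (simp add: add_divide_distrib[symmetric])
  finally have "alphaLV n a i x = 1 / A" .
  moreover have "1 / A \<le> 1" using A1 by simp
  ultimately show False using gt by simp
qed

lemma U_eq:
  assumes n2: "n \<ge> 2" and pos: "\<forall>i\<in>{1..n}. a i i > 0"
    and nn: "\<forall>i\<in>{1..n}. \<forall>j\<in>{1..n}. a i j \<ge> 0"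
    and C: "\<forall>k\<in>{1..n}. condC n a k"
    and i: "i \<in> {1..n}"
  shows "Ubound n a i = Max {(a j j - a i j) / (a i i * a j j - a i j * a j i) | j. j \<in> {1..n} - {i}}"
proof -
  define S where "S = {(a j j - a i j) / (a i i * a j j - a i j * a j i) | j. j \<in> {1..n} - {i}}"
  define T where "T = {(a k j - a i j) / (a i i * a k j - a i j * a k i) | j k.
                 j \<in> {1..n} - {i} \<and> k \<in> {1..n} - {i} \<and> a k j > a i j}"
  have finS: "finite S"
  proof -
    have "S \<subseteq> (\<lambda>j. (a j j - a i j) / (a i i * a j j - a i j * a j i)) ` {1..n}"
      unfolding S_def by auto
    then show ?thesis by (rule finite_subset) auto
  qed
  have fin: "finite T"
  proof -
    have "T \<subseteq> (\<lambda>(j,k). (a k j - a i j) / (a i i * a k j - a i j * a k i)) ` ({1..n}\<times>{1..n})"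
      unfolding T_def by auto
    then show ?thesis by (rule finite_subset) auto
  qed
  obtain j0 where j0: "j0 \<in> {1..n} - {i}"
  proof (cases "i = 1")
    case True then show ?thesis using that[of 2] n2 by auto
  next
    case False then show ?thesis using that[of 1] n2 by auto
  qed
  have neS: "S \<noteq> {}" unfolding S_def using j0 by blast
  have aii: "a i i > 0" using pos i by auto
  have facts: "a j i < a i i \<and> a i j < a j j \<and> 0 \<le> a i j \<and> a j j > 0" if "j \<in> {1..n} - {i}" for j
    using pair_lt[OF pos nn C i, of j] pair_lt[OF pos nn C, of j i] that i nn pos by auto
  have Sle: "\<forall>y\<in>S. y \<le> 1 / a i i"
    unfolding S_def using facts term_le_inv[OF aii] by blast
  have ST: "S \<subseteq> T" unfolding S_def T_def using facts by blast
  show ?thesis unfolding S_def[symmetric]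
  proof (cases "\<exists>j\<in>{1..n} - {i}. a i i \<le> a j i \<or> a i j = 0")
    case True
    hence U: "Ubound n a i = 1 / a i i" by (simp add: Ubound_def)
    from True obtain j1 where j1: "j1 \<in> {1..n} - {i}" "a i j1 = 0"
      using facts by force
    have "(a j1 j1 - a i j1) / (a i i * a j1 j1 - a i j1 * a j1 i) = 1 / a i i"
      using j1 facts[OF j1(1)] by simp
    moreover have "(a j1 j1 - a i j1) / (a i i * a j1 j1 - a i j1 * a j1 i) \<in> S"
      unfolding S_def using j1 by blast
    ultimately have "Max S = 1 / a i i" using Sle finS by (intro Max_eqI) auto
    then show "Ubound n a i = Max S" using U by simp
  next
    case c1: False
    show "Ubound n a i = Max S"
    proof (cases "(\<forall>j\<in>{1..n} - {i}. a j i < a i i) \<and>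
             (\<forall>j\<in>{1..n} - {i}. \<forall>k\<in>{1..n} - {i}. a j k \<le> a i k)")
      case True
      hence "a j0 j0 \<le> a i j0" using j0 by auto
      with facts[OF j0] show ?thesis by simp
    next
      case c2: False
      have U: "Ubound n a i = Max T"
        unfolding Ubound_def T_def by (simp only: if_not_P[OF c1] if_not_P[OF c2])
      have neT: "T \<noteq> {}" using neS ST by blast
      have "Max S \<in> T" using Max_in[OF finS neS] ST by blast
      hence "Max S \<le> Max T" using fin by simp
      moreover have "Max T \<le> Max S"
      proof -
        have "Max T \<in> T" using Max_in[OF fin neT] .
        then obtain j k where jk: "j \<in> {1..n} - {i}" "k \<in> {1..n} - {i}" "a k j > a i j"
          and MT: "Max T = (a k j - a i j) / (a i i * a k j - a i j * a k i)"
          unfolding T_def by blast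
        have sj: "(a j j - a i j) / (a i i * a j j - a i j * a j i) \<in> S"
          unfolding S_def using jk by blast
        have "Max T \<le> (a j j - a i j) / (a i i * a j j - a i j * a j i)"
        proof (cases "k = j")
          case True then show ?thesis using MT by simp
        next
          case False
          have ij: "i \<noteq> j" using jk by auto
          have l: "k \<in> {1..n} - {i, j}" using jk False by auto
          have jn: "j \<in> {1..n}" using jk by auto
          have Dp: "0 < a i i * a j j - a i j * a j i"
            using D_pos[OF aii] facts[OF jk(1)] by blast
          have lc: "(a k i * (a j j - a i j) + a k j * (a i i - a j i)) / (a i i * a j j - a i j * a j i) < 1"
            using l_cond[OF pos nn C i jn ij l] .
          hence lc': "a k i * (a j j - a i j) + a k j * (a i i - a j i) < a i i * a j j - a i j * a j i"
            using Dp by (simp add: divide_less_eq)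
          have aki: "a k i < a i i" using facts[OF jk(2)] by simp
          have Ep: "0 < a i i * a k j - a i j * a k i"
          proof -
            have "a i j * a k i \<le> a i j * a i i"
              using facts[OF jk(1)] aki by (intro mult_left_mono) auto
            moreover have "a i i * a i j < a i i * a k j" using aii jk by (intro mult_strict_left_mono) auto
            ultimately show ?thesis by (simp add: mult.commute)
          qed
          show ?thesis unfolding MT
            by (rule frac_cmp[OF _ Ep Dp refl refl]) (use facts[OF jk(1)] lc' in \<open>auto simp: mult.commute\<close>)
        qed
        also have "\<dots> \<le> Max S" using sj finS by simp
        finally show ?thesis .
      qed
      ultimately show ?thesis using U by simp
    qed
  qed
qed

theorem mainTheorem8:
  fixes n :: nat and a :: "nat \<Rightarrow> nat \<Rightarrow> real" and b :: "nat \<Rightarrow> real"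
  assumes "n \<ge> 2"
    and "\<forall>i\<in>{1..n}. b i > 0"
    and "\<forall>i\<in>{1..n}. a i i > 0"
    and "\<forall>i\<in>{1..n}. \<forall>j\<in>{1..n}. a i j \<ge> 0"
    and "\<forall>k\<in>{1..n}. condC n a k"
  shows "(\<forall>i\<in>{1..n}. \<forall>j\<in>{1..n}. i \<noteq> j \<longrightarrow>
            a i i > a j i \<and> a j j > a i j \<and>
            (\<forall>l\<in>{1..n} - {i, j}.
               (a l i * (a j j - a i j) + a l j * (a i i - a j i)) / (a i i * a j j - a i j * a j i) < 1))
       \<and> (\<forall>i\<in>{1..n}. Ubound n a i =
            Max {(a j j - a i j) / (a i i * a j j - a i j * a j i) | j. j \<in> {1..n} - {i}})"
proof (intro conjI ballI impI)
  fix i j assume i: "i \<in> {1..n}" and j: "j \<in> {1..n}" and ij: "i \<noteq> j"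
  show "a i i > a j i" using pair_lt[OF assms(3,4,5) i j ij] .
  show "a j j > a i j" using pair_lt[OF assms(3,4,5) j i] ij by auto
  fix l assume "l \<in> {1..n} - {i, j}"
  then show "(a l i * (a j j - a i j) + a l j * (a i i - a j i)) / (a i i * a j j - a i j * a j i) < 1"
    using l_cond[OF assms(3,4,5) i j ij] by blast
next
  fix i assume "i \<in> {1..n}"
  then show "Ubound n a i = Max {(a j j - a i j) / (a i i * a j j - a i j * a j i) | j. j \<in> {1..n} - {i}}"
    using U_eq[OF assms(1,3,4,5)] by blast
qed

end
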